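(* Let $X,Y$ be infinite dimensional Banach lattices which are relatively $s$-decomposable for some $1\le s\le\infty$. If $a=(a_i)\in X_L$ and $b=(b_i)\in\ell_s$, then $ab:=(a_ib_i)\in Y_U$ and $$\|ab\|_{Y_U}\le D_s(X,Y)\,\|b\|_{\ell_s}\,\|a\|_{X_L}.$$
   Context: Banach lattices are real; disjoint means $|x|\wedge|y|=0$. $X,Y$ are relatively $s$-decomposable if there is $D$ with $\|\sum_{i=1}^n y_i\|_Y\le D(\sum_i(\|y_i\|_Y/\|x_i\|_X)^s)^{1/s}\|\sum_{i=1}^n x_i\|_X$ for all $n$ and all pairwise disjoint nonzero $x_1,\dots,x_n\in X$, pairwise disjoint nonzero $y_1,\dots,y_n\in Y$ (max for $s=\infty$); $D_s(X,Y)$ is the infimum of such $D$. $\mathfrak B_n(X)$ is the set of $n$-tuples of pairwise disjoint norm-one elements of $X$. For $a\in\mathbb R^n$: $\|a\|_{X_U(n)}:=\sup\{\|\sum_{i=1}^n a_ix_i\|_X:(x_i)\in\mathfrak B_n(X)\}$; $\Phi_n(a):=\inf\{\|\sum_{i=1}^n a_ix_i\|_X:(x_i)\in\mathfrak B_n(X)\}$; $\|a\|_{X_L(n)}:=\inf\{\sum_{k\in F}\Phi_n(a^k): F\text{ finite}, a^k\in\mathbb R^n, a=\sum_{k\in F}a^k\}$. $X_U$ (resp. $X_L$) is the space of real sequences $a$ with $\|a\|_{X_U}:=\sup_n\|(a_i)_{i=1}^n\|_{X_U(n)}<\infty$ (resp. $\|a\|_{X_L}:=\sup_n\|(a_i)_{i=1}^n\|_{X_L(n)}<\infty$);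 $Y_U$ is defined likewise from $Y$. *)

theory Defs
  imports "HOL-Analysis.Analysis"
begin

definition lat_abs :: "'a::{lattice,uminus} \<Rightarrow> 'a" where
  "lat_abs x = sup x (- x)"

class banach_lattice = banach + ordered_real_vector + lattice +
  assumes lattice_norm: "sup x (- x) \<le> sup y (- y) \<Longrightarrow> norm x \<le> norm y"

definition lat_disjoint :: "'a::banach_lattice \<Rightarrow> 'a \<Rightarrow> bool" where
  "lat_disjoint x y \<longleftrightarrow> inf (lat_abs x) (lat_abs y) = 0"

definition infinite_dimensional :: "'a::real_vector itself \<Rightarrow> bool" where
  "infinite_dimensional (_::'a itself) \<longleftrightarrow> \<not> (\<exists>B::'a set. finite B \<and> span B = UNIV)"

definition disj_nonzero :: "nat \<Rightarrow> (nat \<Rightarrow> 'a::banach_lattice) \<Rightarrow> bool" where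
  "disj_nonzero n x \<longleftrightarrow> (\<forall>i<n. x i \<noteq> 0) \<and>
     (\<forall>i<n. \<forall>j<n. i \<noteq> j \<longrightarrow> lat_disjoint (x i) (x j))"

definition s_comb :: "ereal \<Rightarrow> nat \<Rightarrow> (nat \<Rightarrow> real) \<Rightarrow> real" where
  "s_comb s n t = (if s = \<infinity> then Max (insert 0 (t ` {..<n}))
     else (\<Sum>i<n. t i powr real_of_ereal s) powr (1 / real_of_ereal s))"

definition rel_decomp_const ::
  "'a::banach_lattice itself \<Rightarrow> 'b::banach_lattice itself \<Rightarrow> ereal \<Rightarrow> real \<Rightarrow> bool" where
  "rel_decomp_const (_::'a itself) (_::'b itself) s D \<longleftrightarrow>
     (\<forall>n. \<forall>(x::nat \<Rightarrow> 'a) (y::nat \<Rightarrow> 'b). disj_nonzero n x \<longrightarrow> disj_nonzero n y \<longrightarrow>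
        norm (\<Sum>i<n. y i) \<le> D * s_comb s n (\<lambda>i. norm (y i) / norm (x i)) * norm (\<Sum>i<n. x i))"

definition rel_s_decomposable ::
  "'a::banach_lattice itself \<Rightarrow> 'b::banach_lattice itself \<Rightarrow> ereal \<Rightarrow> bool" where
  "rel_s_decomposable TA TB s \<longleftrightarrow> (\<exists>D. rel_decomp_const TA TB s D)"

definition D_s ::
  "'a::banach_lattice itself \<Rightarrow> 'b::banach_lattice itself \<Rightarrow> ereal \<Rightarrow> real" where
  "D_s TA TB s = Inf {D. rel_decomp_const TA TB s D}"

definition frakB :: "'a::banach_lattice itself \<Rightarrow> nat \<Rightarrow> (nat \<Rightarrow> 'a) set" where
  "frakB (_::'a itself) n = {x. (\<forall>i<n. norm (x i) = 1) \<and>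
     (\<forall>i<n. \<forall>j<n. i \<noteq> j \<longrightarrow> lat_disjoint (x i) (x j))}"

definition XU_n :: "'a::banach_lattice itself \<Rightarrow> nat \<Rightarrow> (nat \<Rightarrow> real) \<Rightarrow> real" where
  "XU_n TA n a = (SUP x\<in>frakB TA n. norm (\<Sum>i<n. a i *\<^sub>R x i))"

definition Phi_n :: "'a::banach_lattice itself \<Rightarrow> nat \<Rightarrow> (nat \<Rightarrow> real) \<Rightarrow> real" where
  "Phi_n TA n a = (INF x\<in>frakB TA n. norm (\<Sum>i<n. a i *\<^sub>R x i))"

definition XL_n :: "'a::banach_lattice itself \<Rightarrow> nat \<Rightarrow> (nat \<Rightarrow> real) \<Rightarrow> real" where
  "XL_n TA n a = Inf {\<Sum>k\<in>F. Phi_n TA n (c k) | F c. finite (F::nat set) \<and>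
                       (\<forall>i<n. a i = (\<Sum>k\<in>F. c k i))}"

definition in_XU :: "'a::banach_lattice itself \<Rightarrow> (nat \<Rightarrow> real) \<Rightarrow> bool" where
  "in_XU TA a \<longleftrightarrow> bdd_above (range (\<lambda>n. XU_n TA n a))"

definition norm_XU :: "'a::banach_lattice itself \<Rightarrow> (nat \<Rightarrow> real) \<Rightarrow> real" where
  "norm_XU TA a = (SUP n. XU_n TA n a)"

definition in_XL :: "'a::banach_lattice itself \<Rightarrow> (nat \<Rightarrow> real) \<Rightarrow> bool" where
  "in_XL TA a \<longleftrightarrow> bdd_above (range (\<lambda>n. XL_n TA n a))"

definition norm_XL :: "'a::banach_lattice itself \<Rightarrow> (nat \<Rightarrow> real) \<Rightarrow> real" where
  "norm_XL TA a = (SUP n. XL_n TA n a)"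

definition in_lp :: "ereal \<Rightarrow> (nat \<Rightarrow> real) \<Rightarrow> bool" where
  "in_lp s b \<longleftrightarrow> (if s = \<infinity> then bdd_above (range (\<lambda>i. \<bar>b i\<bar>))
     else summable (\<lambda>i. \<bar>b i\<bar> powr real_of_ereal s))"

definition norm_lp :: "ereal \<Rightarrow> (nat \<Rightarrow> real) \<Rightarrow> real" where
  "norm_lp s b = (if s = \<infinity> then (SUP i. \<bar>b i\<bar>)
     else (\<Sum>i. \<bar>b i\<bar> powr real_of_ereal s) powr (1 / real_of_ereal s))"

end

theory Submission
  imports Defs "HOL-Library.Lattice_Algebras"
begin


context banach_lattice begin
subclass lattice_ab_group_add ..
end


lemma scale_inf: fixes a :: "'a::banach_lattice" shows "0 \<le> c \<Longrightarrow> c *\<^sub>R inf a b = inf (c *\<^sub>R a) (c *\<^sub>R b)"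
proof (cases "c = 0")
  case True then show ?thesis by simp
next
  case False
  assume c: "0 \<le> c"
  then have cp: "0 < c" using False by simp
  show ?thesis
  proof (rule antisym)
    show "c *\<^sub>R inf a b \<le> inf (c *\<^sub>R a) (c *\<^sub>R b)"
      using c by (simp add: scaleR_left_mono)
    have "(1/c) *\<^sub>R inf (c *\<^sub>R a) (c *\<^sub>R b) \<le> inf a b"
    proof (rule le_infI)
      have "(1/c) *\<^sub>R inf (c *\<^sub>R a) (c *\<^sub>R b) \<le> (1/c) *\<^sub>R (c *\<^sub>R a)"
        using cp by (intro scaleR_left_mono) auto
      then show "(1/c) *\<^sub>R inf (c *\<^sub>R a) (c *\<^sub>R b) \<le> a" using cp by simp
      have "(1/c) *\<^sub>R inf (c *\<^sub>R a) (c *\<^sub>R b) \<le> (1/c) *\<^sub>R (c *\<^sub>R b)"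
        using cp by (intro scaleR_left_mono) auto
      then show "(1/c) *\<^sub>R inf (c *\<^sub>R a) (c *\<^sub>R b) \<le> b" using cp by simp
    qed
    then have "c *\<^sub>R ((1/c) *\<^sub>R inf (c *\<^sub>R a) (c *\<^sub>R b)) \<le> c *\<^sub>R inf a b"
      using c by (rule scaleR_left_mono)
    then show "inf (c *\<^sub>R a) (c *\<^sub>R b) \<le> c *\<^sub>R inf a b" using cp by simp
  qed
qed

lemma scale_sup: fixes a :: "'a::banach_lattice" shows "0 \<le> c \<Longrightarrow> c *\<^sub>R sup a b = sup (c *\<^sub>R a) (c *\<^sub>R b)"
proof -
  assume c: "0 \<le> c"
  have "c *\<^sub>R sup a b = c *\<^sub>R (- inf (-a) (-b))" by (simp add: neg_inf_eq_sup)
  also have "\<dots> = - inf (c *\<^sub>R (-a)) (c *\<^sub>R (-b))" using scale_inf[OF c, of "-a" "-b"]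
    by (metis scaleR_minus_right)
  also have "\<dots> = sup (c *\<^sub>R a) (c *\<^sub>R b)" by (simp add: neg_inf_eq_sup)
  finally show ?thesis .
qed

lemma lat_abs_nonneg: fixes x :: "'a::banach_lattice" shows "0 \<le> lat_abs x"
proof -
  have "x \<le> lat_abs x" "- x \<le> lat_abs x" by (auto simp: lat_abs_def)
  then have "x + - x \<le> lat_abs x + lat_abs x" by (rule add_mono)
  then show ?thesis by simp
qed

lemma lat_abs_eq_0[simp]: fixes x :: "'a::banach_lattice" shows "lat_abs x = 0 \<longleftrightarrow> x = 0"
  by (simp add: lat_abs_def)

lemma lat_abs_pos: fixes x :: "'a::banach_lattice" shows "0 \<le> x \<Longrightarrow> lat_abs x = x"
  unfolding lat_abs_def
  using order_trans[of "-x" 0 x] by (simp add: sup_absorb1)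

lemma lat_abs_abs[simp]: fixes x :: "'a::banach_lattice" shows "lat_abs (lat_abs x) = lat_abs x"
  by (simp add: lat_abs_pos lat_abs_nonneg)

lemma lat_abs_neg[simp]: fixes x :: "'a::banach_lattice" shows "lat_abs (- x) = lat_abs x"
  by (simp add: lat_abs_def sup_commute)

lemma norm_lat_abs[simp]: fixes x :: "'a::banach_lattice" shows "norm (lat_abs x) = norm x"
proof (rule antisym)
  show "norm (lat_abs x) \<le> norm x"
    by (rule lattice_norm) (metis lat_abs_abs lat_abs_def order_refl)
  show "norm x \<le> norm (lat_abs x)"
    by (rule lattice_norm) (metis lat_abs_abs lat_abs_def order_refl)
qed

lemma norm_mono_pos: fixes x :: "'a::banach_lattice" shows "0 \<le> x \<Longrightarrow> x \<le> y \<Longrightarrow> norm x \<le> norm y"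
  by (rule lattice_norm) (metis lat_abs_def lat_abs_pos order.trans)

lemma lat_abs_scale: fixes x :: "'a::banach_lattice" shows "lat_abs (c *\<^sub>R x) = \<bar>c\<bar> *\<^sub>R lat_abs x"
proof (cases "0 \<le> c")
  case True then show ?thesis by (simp add: lat_abs_def scale_sup)
next
  case False
  then have "c *\<^sub>R x = \<bar>c\<bar> *\<^sub>R (- x)" by simp
  then show ?thesis by (simp add: lat_abs_def scale_sup sup_commute)
qed

lemma dom: fixes a :: "'a::banach_lattice" shows "0 \<le> a \<Longrightarrow> 0 \<le> b \<Longrightarrow> 0 \<le> c \<Longrightarrow> inf (c *\<^sub>R a) b \<le> max c 1 *\<^sub>R inf a b"
proof -
  assume a: "0 \<le> a" and b: "0 \<le> b" and c: "0 \<le> c"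
  have "c *\<^sub>R a \<le> max c 1 *\<^sub>R a" using a by (intro scaleR_right_mono) auto
  moreover have "1 *\<^sub>R b \<le> max c 1 *\<^sub>R b" using b by (intro scaleR_right_mono) auto
  ultimately have "inf (c *\<^sub>R a) b \<le> inf (max c 1 *\<^sub>R a) (max c 1 *\<^sub>R b)"
    by (intro inf_mono) auto
  also have "\<dots> = max c 1 *\<^sub>R inf a b" by (rule scale_inf[symmetric]) auto
  finally show ?thesis .
qed

lemma dom0: fixes a :: "'a::banach_lattice" shows "0 \<le> a \<Longrightarrow> 0 \<le> b \<Longrightarrow> 0 \<le> c \<Longrightarrow> inf a b = 0 \<Longrightarrow> inf (c *\<^sub>R a) b = 0"
proof -
  assume a: "0 \<le> a" and b: "0 \<le> b" and c: "0 \<le> c" and ab: "inf a b = 0"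
  have "inf (c *\<^sub>R a) b \<le> 0" using dom[OF a b c] ab by simp
  moreover have "0 \<le> inf (c *\<^sub>R a) b" using a b c by (simp add: scaleR_nonneg_nonneg)
  ultimately show ?thesis by simp
qed

lemma posneg: fixes x :: "'a::banach_lattice" shows "x = sup x 0 - sup (- x) 0"
proof -
  have "sup (- x) 0 = - inf x 0" by (simp add: neg_inf_eq_sup)
  then show ?thesis using prts[of x] by (simp add: pprt_def nprt_def)
qed

lemma posneg_disj: fixes x :: "'a::banach_lattice" shows "inf (sup x 0) (sup (- x) 0) = 0"
proof -
  define m where "m = sup (- x) 0"
  have m: "m = - inf x 0" unfolding m_def by (simp add: neg_inf_eq_sup)
  have "sup x 0 = x + m" unfolding m_def using add_sup_distrib_left[of x "-x" 0]
    by (simp add: sup_commute)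
  then have "inf (sup x 0) m = inf x 0 + m" by (simp add: add_inf_distrib_right)
  also have "inf x 0 + m = 0" unfolding m by (rule add.right_inverse)
  finally show ?thesis unfolding m_def .
qed

lemma inf_add_le: fixes a :: "'a::banach_lattice" shows "0 \<le> b \<Longrightarrow> inf (a + b) c \<le> inf a c + b"
proof -
  assume b: "0 \<le> b"
  have "inf (a + b) c \<le> inf (a + b) (c + b)" using b by (intro inf_mono) auto
  also have "\<dots> = inf a c + b" by (simp add: add_inf_distrib_right)
  finally show ?thesis .
qed

lemma riesz: fixes x :: "'a::banach_lattice" shows "0 \<le> x \<Longrightarrow> 0 \<le> y \<Longrightarrow> 0 \<le> e \<Longrightarrow> inf (x + y) e \<le> inf x e + inf y e"
proof -
  assume x: "0 \<le> x" and y: "0 \<le> y" and e: "0 \<le> e"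
  define z where "z = inf (x + y) e"
  have "z - inf x e = sup (z - x) (z - e)"
    by (simp add: diff_inf_eq_sup add_sup_distrib_left)
  also have "\<dots> \<le> y"
  proof (rule sup_least)
    show "z - x \<le> y" unfolding z_def by (simp add: algebra_simps le_infI1)
    show "z - e \<le> y" unfolding z_def using y by (simp add: le_infI2 order_trans[OF _ y])
  qed
  finally have 1: "z - inf x e \<le> y" .
  have z0: "0 \<le> inf x e" using x e by simp
  have ze: "z \<le> e" unfolding z_def by simp
  have "z - inf x e \<le> e" using diff_left_mono[OF z0, of z] ze by (metis diff_zero order_trans)
  then have "z - inf x e \<le> inf y e" using 1 by (metis le_inf_iff)
  then have "z \<le> inf y e + inf x e" by (simp only: diff_le_eq)
  then show ?thesis unfolding z_def by (simp only: add.commute)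
qed

lemma abs_triangle: fixes a :: "'a::banach_lattice" shows "lat_abs (a + b) \<le> lat_abs a + lat_abs b"
proof -
  have "a \<le> lat_abs a" "- a \<le> lat_abs a" "b \<le> lat_abs b" "- b \<le> lat_abs b"
    by (auto simp: lat_abs_def)
  then show ?thesis unfolding lat_abs_def[of "a+b"]
    by (metis add_mono minus_add_distrib sup_least lat_abs_def)
qed

lemma dc_add: fixes a :: "'a::banach_lattice" shows "0 \<le> e \<Longrightarrow> inf (lat_abs a) e = 0 \<Longrightarrow> inf (lat_abs b) e = 0 \<Longrightarrow> inf (lat_abs (a + b)) e = 0"
proof -
  assume e: "0 \<le> e" and a: "inf (lat_abs a) e = 0" and b: "inf (lat_abs b) e = 0"
  have "inf (lat_abs (a + b)) e \<le> inf (lat_abs a + lat_abs b) e"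
    by (intro inf_mono abs_triangle) auto
  also have "\<dots> \<le> inf (lat_abs a) e + inf (lat_abs b) e"
    using e by (intro riesz lat_abs_nonneg)
  finally have "inf (lat_abs (a + b)) e \<le> 0" using a b by simp
  moreover have "0 \<le> inf (lat_abs (a + b)) e" using e lat_abs_nonneg by simp
  ultimately show ?thesis by simp
qed

lemma dc_scale: fixes a :: "'a::banach_lattice" shows "0 \<le> e \<Longrightarrow> inf (lat_abs a) e = 0 \<Longrightarrow> inf (lat_abs (c *\<^sub>R a)) e = 0"
  by (simp add: lat_abs_scale dom0 lat_abs_nonneg)

lemma dc_sum: fixes e :: "'a::banach_lattice" shows "0 \<le> e \<Longrightarrow> (\<And>i. i \<in> I \<Longrightarrow> inf (lat_abs (f i)) e = 0) \<Longrightarrow> inf (lat_abs (sum f I)) e = 0"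
proof (induction I rule: infinite_finite_induct)
  case (infinite A)
  have "inf (0::'a) e = 0" using infinite(2) by (metis inf_absorb1)
  then show ?case using infinite by (simp add: lat_abs_def)
next
  case empty
  have "inf (0::'a) e = 0" using empty by (metis inf_absorb1)
  then show ?case by (simp add: lat_abs_def)
next
  case (insert x F) then show ?case by (simp add: dc_add)
qed

lemma abs_le_add_disj: fixes u :: "'a::banach_lattice" shows "inf (lat_abs u) (lat_abs v) = 0 \<Longrightarrow> lat_abs u \<le> lat_abs (u + v)"
proof -
  assume d: "inf (lat_abs u) (lat_abs v) = 0"
  have "lat_abs u = lat_abs ((u + v) + (- v))" by simp
  also have "\<dots> \<le> lat_abs (u + v) + lat_abs v" using abs_triangle[of "u+v" "-v"] by simp
  finally have 1: "lat_abs u \<le> lat_abs (u + v) + lat_abs v" .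
  have "lat_abs u = inf (lat_abs (u + v) + lat_abs v) (lat_abs u)" using 1 by (simp add: inf_absorb2)
  also have "\<dots> \<le> inf (lat_abs (u + v)) (lat_abs u) + inf (lat_abs v) (lat_abs u)"
    by (intro riesz lat_abs_nonneg)
  also have "\<dots> = inf (lat_abs (u + v)) (lat_abs u)" using d by (simp add: inf_commute)
  also have "\<dots> \<le> lat_abs (u + v)" by simp
  finally show ?thesis .
qed



lemma step_exists: "P 0 \<Longrightarrow> \<not> P n \<Longrightarrow> \<exists>k. P k \<and> \<not> P (Suc k)"
  by (induction n) auto

lemma exists_disj:
  fixes TX :: "'a::banach_lattice itself"
  assumes inf: "infinite_dimensional TX"
  shows "\<exists>x::nat \<Rightarrow> 'a. disj_nonzero n x"
proof (rule ccontr)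
  assume nex: "\<not> ?thesis"
  have "\<exists>k. (\<exists>x::nat\<Rightarrow>'a. disj_nonzero k x) \<and> \<not>(\<exists>x::nat\<Rightarrow>'a. disj_nonzero (Suc k) x)"
    by (rule step_exists[where P="\<lambda>k. \<exists>x::nat\<Rightarrow>'a. disj_nonzero k x"])
       (use nex in \<open>auto simp: disj_nonzero_def\<close>)
  then obtain k and x :: "nat \<Rightarrow> 'a" where dx: "disj_nonzero k x"
    and nk: "\<not>(\<exists>y::nat\<Rightarrow>'a. disj_nonzero (Suc k) y)" by blast
  define e where "e i = lat_abs (x i)" for i
  have e0: "0 \<le> e i" for i unfolding e_def by (rule lat_abs_nonneg)
  have enz: "e i \<noteq> 0" if "i < k" for i using dx that unfolding e_def disj_nonzero_def by simp
  have edisj: "inf (e i) (e j) = 0" if "i < k" "j < k" "i \<noteq> j" for i j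
    using dx that unfolding e_def disj_nonzero_def lat_disjoint_def by simp
  have maxl: "z = 0" if H: "\<And>i. i < k \<Longrightarrow> inf (lat_abs z) (e i) = 0" for z
  proof (rule ccontr)
    assume z: "z \<noteq> 0"
    have "disj_nonzero (Suc k) (x(k := z))"
      unfolding disj_nonzero_def
    proof (intro conjI allI impI)
      fix i assume "i < Suc k" then show "(x(k:=z)) i \<noteq> 0"
        using z dx by (cases "i = k") (auto simp: disj_nonzero_def)
    next
      fix i j assume "i < Suc k" "j < Suc k" "i \<noteq> j"
      then show "lat_disjoint ((x(k:=z)) i) ((x(k:=z)) j)"
        using H dx by (cases "i = k"; cases "j = k")
          (auto simp: disj_nonzero_def lat_disjoint_def e_def inf_commute)
    qed
    with nk show False by blast
  qed
  have aux: "inf u (e l) = 0" if "0 \<le> u" "u \<le> e j" "l < k" "j < k" "l \<noteq> j" for u j l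
  proof -
    have "inf u (e l) \<le> inf (e j) (e l)" using that by (intro inf_mono) auto
    also have "\<dots> = 0" using edisj that by simp
    finally show ?thesis using that e0[of l] by (intro antisym) auto
  qed
  have atom: "u = 0 \<or> v = 0" if j: "j < k" and u: "0 \<le> u" "u \<le> e j" and v: "0 \<le> v" "v \<le> e j"
    and uv: "inf u v = 0" for j u v
  proof (rule ccontr)
    assume nz: "\<not> (u = 0 \<or> v = 0)"
    have au: "lat_abs u = u" "lat_abs v = v" using u v by (auto simp: lat_abs_pos)
    have "disj_nonzero (Suc k) (x(j := u, k := v))"
      unfolding disj_nonzero_def
    proof (intro conjI allI impI)
      fix i assume "i < Suc k" then show "(x(j := u, k := v)) i \<noteq> 0"
        using nz dx j by (cases "i = k"; cases "i = j") (auto simp: disj_nonzero_def)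
    next
      fix i i' assume ii: "i < Suc k" "i' < Suc k" "i \<noteq> i'"
      have 1: "inf u (lat_abs (x l)) = 0" if "l < k" "l \<noteq> j" for l
        using aux[OF u(1) u(2) that(1) j that(2)] by (simp add: e_def)
      have 2: "inf v (lat_abs (x l)) = 0" if "l < k" "l \<noteq> j" for l
        using aux[OF v(1) v(2) that(1) j that(2)] by (simp add: e_def)
      show "lat_disjoint ((x(j := u, k := v)) i) ((x(j := u, k := v)) i')"
        using ii j dx uv 1 2 au by (cases "i = k"; cases "i' = k"; cases "i = j"; cases "i' = j")
          (auto simp: disj_nonzero_def lat_disjoint_def inf_commute)
    qed
    with nk show False by blast
  qed
  have decomp: "\<exists>\<beta>\<ge>0. \<beta> *\<^sub>R e j \<le> p \<and> inf (p - \<beta> *\<^sub>R e j) (e j) = 0"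
    if j: "j < k" and p: "0 \<le> p" for j p
  proof -
    define f where "f = e j"
    have f0: "0 \<le> f" unfolding f_def by (rule e0)
    have fn: "0 < norm f" unfolding f_def using enz[OF j] by simp
    define S where "S = {t. 0 \<le> t \<and> t *\<^sub>R f \<le> p}"
    have S0: "0 \<in> S" unfolding S_def using p by simp
    have Sbd: "t \<le> norm p / norm f" if "t \<in> S" for t
    proof -
      have "norm (t *\<^sub>R f) \<le> norm p"
        using that f0 unfolding S_def by (intro norm_mono_pos) (auto simp: scaleR_nonneg_nonneg)
      then have "t * norm f \<le> norm p" using that unfolding S_def by simp
      then show ?thesis using fn by (simp add: field_simps)
    qed
    have bdd: "bdd_above S" using Sbd by (auto simp: bdd_above_def)
    define \<beta> where "\<beta> = Sup S"
    have Sup_ge: "t \<le> \<beta>" if "t \<in> S" for t unfolding \<beta>_def by (rule cSup_upper[OF that bdd])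
    have b0: "0 \<le> \<beta>" using Sup_ge[OF S0] .
    have bf: "\<beta> *\<^sub>R f \<le> p"
    proof -
      define w where "w = sup (\<beta> *\<^sub>R f - p) 0"
      have "norm w \<le> 0 + \<epsilon>" if eps: "0 < \<epsilon>" for \<epsilon>
      proof -
        define \<delta> where "\<delta> = \<epsilon> / norm f"
        have d: "0 < \<delta>" unfolding \<delta>_def using eps fn by simp
        have "\<beta> - \<delta> < Sup S" using d unfolding \<beta>_def by simp
        then obtain t where t: "t \<in> S" "\<beta> - \<delta> < t" using less_cSup_iff[of S] S0 bdd by blast
        have tb: "t \<le> \<beta>" using Sup_ge[OF t(1)] .
        have "\<beta> *\<^sub>R f - p \<le> \<beta> *\<^sub>R f - t *\<^sub>R f" using t(1) unfolding S_def by simp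
        also have "\<dots> = (\<beta> - t) *\<^sub>R f" by (simp add: scaleR_diff_left)
        finally have "w \<le> (\<beta> - t) *\<^sub>R f" unfolding w_def using tb f0
          by (simp add: scaleR_nonneg_nonneg)
        then have "norm w \<le> norm ((\<beta> - t) *\<^sub>R f)" unfolding w_def by (intro norm_mono_pos) auto
        also have "\<dots> = (\<beta> - t) * norm f" using tb by simp
        also have "\<dots> \<le> \<delta> * norm f" using t(2) fn by (intro mult_right_mono) auto
        also have "\<dots> = \<epsilon>" unfolding \<delta>_def using fn by simp
        finally show ?thesis by simp
      qed
      then have "norm w \<le> 0" by (rule field_le_epsilon)
      then have "w = 0" by simp
      then have "\<beta> *\<^sub>R f - p \<le> 0" unfolding w_def by (metis sup_ge1)
      then show ?thesis by simp
    qed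
    have big: "inf (sup (p - t *\<^sub>R f) 0) f = 0" if t: "\<beta> < t" for t
    proof -
      define u where "u = inf (sup (p - t *\<^sub>R f) 0) f"
      define v where "v = inf (sup (- (p - t *\<^sub>R f)) 0) f"
      have uv: "inf u v = 0"
      proof (rule antisym)
        have "inf u v \<le> inf (sup (p - t *\<^sub>R f) 0) (sup (- (p - t *\<^sub>R f)) 0)"
          unfolding u_def v_def by (intro inf_mono) auto
        then show "inf u v \<le> 0" by (simp only: posneg_disj)
        show "0 \<le> inf u v" unfolding u_def v_def using f0 by simp
      qed
      have "u = 0 \<or> v = 0"
        by (rule atom[OF j]) (use uv f0 in \<open>auto simp: u_def v_def f_def\<close>)
      moreover have "v \<noteq> 0"
      proof
        assume v0: "v = 0"
        define W where "W = sup (t *\<^sub>R f - p) 0"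
        have tpos: "0 \<le> t" using b0 t by simp
        have W0: "0 \<le> W" unfolding W_def by simp
        have Wle: "W \<le> t *\<^sub>R f" unfolding W_def using p f0 tpos
          by (simp add: scaleR_nonneg_nonneg)
        have "inf (t *\<^sub>R f) W \<le> max t 1 *\<^sub>R inf f W" by (rule dom[OF f0 W0 tpos])
        also have "inf f W = v" unfolding v_def W_def by (simp add: inf_commute)
        finally have "W \<le> 0" using v0 Wle by (simp add: inf_absorb2)
        then have "t *\<^sub>R f - p \<le> 0" unfolding W_def by (metis sup_ge1 order_trans)
        then have "t \<in> S" unfolding S_def using tpos by simp
        then show False using Sup_ge t by fastforce
      qed
      ultimately show ?thesis unfolding u_def by simp
    qed
    have q: "inf (p - \<beta> *\<^sub>R f) f = 0"
    proof -
      define q where "q = p - \<beta> *\<^sub>R f"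
      have q0: "0 \<le> inf q f" unfolding q_def using bf f0 by simp
      have "norm (inf q f) \<le> 0 + \<epsilon>" if eps: "0 < \<epsilon>" for \<epsilon>
      proof -
        define t where "t = \<beta> + \<epsilon> / norm f"
        have t: "\<beta> < t" unfolding t_def using eps fn by simp
        have "q = (p - t *\<^sub>R f) + (t - \<beta>) *\<^sub>R f" unfolding q_def by (simp add: algebra_simps)
        also have "\<dots> \<le> sup (p - t *\<^sub>R f) 0 + (t - \<beta>) *\<^sub>R f" by (intro add_right_mono) simp
        finally have "inf q f \<le> inf (sup (p - t *\<^sub>R f) 0 + (t - \<beta>) *\<^sub>R f) f" by (intro inf_mono) auto
        also have "\<dots> \<le> inf (sup (p - t *\<^sub>R f) 0) f + (t - \<beta>) *\<^sub>R f"
          using t f0 by (intro inf_add_le) (simp add: scaleR_nonneg_nonneg)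
        also have "\<dots> = (t - \<beta>) *\<^sub>R f" using big[OF t] by simp
        finally have "norm (inf q f) \<le> norm ((t - \<beta>) *\<^sub>R f)" using q0 by (intro norm_mono_pos)
        also have "\<dots> = \<epsilon>" unfolding t_def using fn eps by simp
        finally show ?thesis by simp
      qed
      then have "norm (inf q f) \<le> 0" by (rule field_le_epsilon)
      then show ?thesis unfolding q_def by simp
    qed
    show ?thesis using b0 bf q unfolding f_def by blast
  qed
  have spanpos: "p \<in> span (e ` {..<k})" if p: "0 \<le> p" for p
  proof -
    have "\<forall>j. \<exists>b. j < k \<longrightarrow> 0 \<le> b \<and> b *\<^sub>R e j \<le> p \<and> inf (p - b *\<^sub>R e j) (e j) = 0"
      using decomp[OF _ p] by blast
    then obtain \<beta> where \<beta>: "\<And>j. j < k \<Longrightarrow> 0 \<le> \<beta> j \<and> \<beta> j *\<^sub>R e j \<le> p \<and> inf (p - \<beta> j *\<^sub>R e j) (e j) = 0"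
      by metis
    define r where "r = p - (\<Sum>j<k. \<beta> j *\<^sub>R e j)"
    have "inf (lat_abs r) (e i) = 0" if i: "i < k" for i
    proof -
      have "r = (p - \<beta> i *\<^sub>R e i) + - (\<Sum>j\<in>{..<k} - {i}. \<beta> j *\<^sub>R e j)"
        unfolding r_def using i by (simp add: sum.remove)
      moreover have "inf (lat_abs (p - \<beta> i *\<^sub>R e i)) (e i) = 0"
        using \<beta>[OF i] by (simp add: lat_abs_pos)
      moreover have "inf (lat_abs (\<Sum>j\<in>{..<k} - {i}. \<beta> j *\<^sub>R e j)) (e i) = 0"
      proof (rule dc_sum[OF e0])
        fix j assume "j \<in> {..<k} - {i}"
        then have "inf (lat_abs (e j)) (e i) = 0" using edisj i by (simp add: e_def)
        then show "inf (lat_abs (\<beta> j *\<^sub>R e j)) (e i) = 0" by (rule dc_scale[OF e0])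
      qed
      ultimately show ?thesis by (metis dc_add[OF e0] lat_abs_neg)
    qed
    then have "r = 0" by (rule maxl)
    then have "p = (\<Sum>j<k. \<beta> j *\<^sub>R e j)" unfolding r_def by simp
    also have "\<dots> \<in> span (e ` {..<k})"
      by (intro span_sum span_scale span_base) auto
    finally show ?thesis .
  qed
  have "y \<in> span (e ` {..<k})" for y :: 'a
  proof -
    have "y = sup y 0 - sup (- y) 0" by (rule posneg)
    also have "\<dots> \<in> span (e ` {..<k})" by (intro span_diff spanpos) auto
    finally show ?thesis .
  qed
  then have "span (e ` {..<k}) = UNIV" by auto
  with inf show False unfolding infinite_dimensional_def by blast
qed



lemma disj_scale:
  fixes u v :: "'a::banach_lattice"
  assumes "lat_disjoint u v" shows "lat_disjoint (c *\<^sub>R u) (d *\<^sub>R v)"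
proof -
  have uv: "inf (lat_abs u) (lat_abs v) = 0" using assms by (simp add: lat_disjoint_def)
  have "inf (\<bar>d\<bar> *\<^sub>R lat_abs v) (lat_abs u) = 0"
    using uv by (intro dom0) (auto simp: lat_abs_nonneg inf_commute)
  then have "inf (\<bar>c\<bar> *\<^sub>R lat_abs u) (\<bar>d\<bar> *\<^sub>R lat_abs v) = 0"
    by (intro dom0) (auto simp: lat_abs_nonneg inf_commute scaleR_nonneg_nonneg)
  then show ?thesis by (simp add: lat_disjoint_def lat_abs_scale)
qed

lemma frakB_nonempty:
  fixes TX :: "'a::banach_lattice itself"
  assumes "infinite_dimensional TX"
  shows "frakB TX n \<noteq> {}"
proof -
  obtain x :: "nat \<Rightarrow> 'a" where x: "disj_nonzero n x" using exists_disj[OF assms] by blast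
  define z where "z i = (1 / norm (x i)) *\<^sub>R x i" for i
  have "z \<in> frakB TX n"
    using x unfolding frakB_def disj_nonzero_def z_def by (auto intro: disj_scale)
  then show ?thesis by blast
qed

lemma exists_nonzero:
  fixes TX :: "'a::banach_lattice itself"
  assumes "infinite_dimensional TX"
  shows "\<exists>x::'a. x \<noteq> 0"
  using exists_disj[OF assms, of 1] unfolding disj_nonzero_def by blast

lemma s_comb_nonneg: "0 \<le> s_comb s n t"
  unfolding s_comb_def by (auto intro: Max_ge)

lemma D_nonneg:
  fixes TX :: "'a::banach_lattice itself" and TY :: "'b::banach_lattice itself"
  assumes "infinite_dimensional TX" "infinite_dimensional TY" "rel_decomp_const TX TY s D"
  shows "0 \<le> D"
proof (rule ccontr)
  assume D: "\<not> 0 \<le> D"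
  obtain x0 :: 'a where x0: "x0 \<noteq> 0" using exists_nonzero[OF assms(1)] by blast
  obtain y0 :: 'b where y0: "y0 \<noteq> 0" using exists_nonzero[OF assms(2)] by blast
  have xd: "disj_nonzero 1 (\<lambda>_. x0)" and yd: "disj_nonzero 1 (\<lambda>_. y0)"
    using x0 y0 by (auto simp: disj_nonzero_def)
  have le: "norm y0 \<le> D * s_comb s 1 (\<lambda>i. norm y0 / norm x0) * norm x0"
    using assms(3)[unfolded rel_decomp_const_def, rule_format, OF xd yd] by simp
  have "D * s_comb s 1 (\<lambda>i. norm y0 / norm x0) \<le> 0"
    using D s_comb_nonneg by (simp add: mult_nonpos_nonneg)
  then have "D * s_comb s 1 (\<lambda>i. norm y0 / norm x0) * norm x0 \<le> 0"
    by (simp add: mult_nonpos_nonneg)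
  moreover have "0 < norm y0" using y0 by simp
  ultimately show False using le by linarith
qed

lemma norm_lp_nonneg: "in_lp s b \<Longrightarrow> 0 \<le> norm_lp s b"
  unfolding in_lp_def norm_lp_def
  by (auto split: if_splits intro: order_trans[OF abs_ge_zero cSUP_upper[of 0 UNIV]])

lemma scomb_le:
  assumes lp: "in_lp s b" and s1: "1 \<le> s" and g: "inj_on g {..<m}"
  shows "s_comb s m (\<lambda>j. \<bar>b (g j)\<bar>) \<le> norm_lp s b"
proof (cases "s = \<infinity>")
  case True
  then have bdd: "bdd_above (range (\<lambda>i. \<bar>b i\<bar>))" using lp by (simp add: in_lp_def)
  have "Max (insert 0 ((\<lambda>j. \<bar>b (g j)\<bar>) ` {..<m})) \<le> (SUP i. \<bar>b i\<bar>)"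
  proof (rule Max.boundedI)
    fix a assume "a \<in> insert 0 ((\<lambda>j. \<bar>b (g j)\<bar>) ` {..<m})"
    then show "a \<le> (SUP i. \<bar>b i\<bar>)"
      using cSUP_upper[OF _ bdd] order_trans[OF abs_ge_zero cSUP_upper[OF _ bdd]] by blast
  qed auto
  then show ?thesis using True by (simp add: s_comb_def norm_lp_def)
next
  case False
  then obtain r where s: "s = ereal r" using s1 by (cases s) auto
  have r1: "1 \<le> r" using s1 s by simp
  have summ: "summable (\<lambda>i. \<bar>b i\<bar> powr r)" using lp False s by (simp add: in_lp_def)
  have "(\<Sum>j<m. \<bar>b (g j)\<bar> powr r) = (\<Sum>i\<in>g ` {..<m}. \<bar>b i\<bar> powr r)"
    using sum.reindex[OF g, of "\<lambda>i. \<bar>b i\<bar> powr r"] by simp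
  also have "\<dots> \<le> (\<Sum>i. \<bar>b i\<bar> powr r)" by (rule sum_le_suminf[OF summ]) auto
  finally have "(\<Sum>j<m. \<bar>b (g j)\<bar> powr r) powr (1 / r) \<le> (\<Sum>i. \<bar>b i\<bar> powr r) powr (1 / r)"
    using r1 by (intro powr_mono2) (auto intro: sum_nonneg)
  then show ?thesis using s by (simp add: s_comb_def norm_lp_def)
qed

lemma subsum:
  fixes x :: "nat \<Rightarrow> 'a::banach_lattice"
  assumes dis: "\<And>i j. i < n \<Longrightarrow> j < n \<Longrightarrow> i \<noteq> j \<Longrightarrow> lat_disjoint (x i) (x j)"
    and I: "I \<subseteq> {..<n}"
  shows "norm (\<Sum>i\<in>I. c i *\<^sub>R x i) \<le> norm (\<Sum>i<n. c i *\<^sub>R x i)"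
proof -
  define u where "u = (\<Sum>i\<in>I. c i *\<^sub>R x i)"
  define v where "v = (\<Sum>i\<in>{..<n} - I. c i *\<^sub>R x i)"
  have split: "(\<Sum>i<n. c i *\<^sub>R x i) = v + u" unfolding u_def v_def
    by (rule sum.subset_diff[OF I]) auto
  have ux: "inf (lat_abs u) (lat_abs (x j)) = 0" if j: "j \<in> {..<n} - I" for j
    unfolding u_def
  proof (rule dc_sum[OF lat_abs_nonneg])
    fix i assume "i \<in> I"
    then have "inf (lat_abs (x i)) (lat_abs (x j)) = 0" using dis[of i j] I j
      by (auto simp: lat_disjoint_def)
    then show "inf (lat_abs (c i *\<^sub>R x i)) (lat_abs (x j)) = 0" by (rule dc_scale[OF lat_abs_nonneg])
  qed
  have "inf (lat_abs v) (lat_abs u) = 0" unfolding v_def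
  proof (rule dc_sum[OF lat_abs_nonneg])
    fix j assume "j \<in> {..<n} - I"
    then have "inf (lat_abs (x j)) (lat_abs u) = 0" using ux by (simp add: inf_commute)
    then show "inf (lat_abs (c j *\<^sub>R x j)) (lat_abs u) = 0" by (rule dc_scale[OF lat_abs_nonneg])
  qed
  then have "lat_abs u \<le> lat_abs (u + v)" by (intro abs_le_add_disj) (simp add: inf_commute)
  then have "norm (lat_abs u) \<le> norm (lat_abs (u + v))" by (intro norm_mono_pos lat_abs_nonneg)
  then show ?thesis using split by (simp add: u_def add.commute)
qed

lemma inf_bound:
  fixes V :: "real set"
  assumes "V \<noteq> {}" "\<And>v. v \<in> V \<Longrightarrow> L \<le> K * v" "0 \<le> K"
  shows "L \<le> K * Inf V"
proof (cases "K = 0")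
  case True
  then show ?thesis using assms by auto
next
  case False
  then have K: "0 < K" using assms by simp
  have "L / K \<le> Inf V"
    by (rule cInf_greatest[OF assms(1)]) (use assms(2) K in \<open>simp add: field_simps mult.commute\<close>)
  then show ?thesis using K by (simp add: field_simps mult.commute)
qed


lemma s_comb_cong: "(\<And>j. j < m \<Longrightarrow> t j = t' j) \<Longrightarrow> s_comb s m t = s_comb s m t'"
proof -
  assume H: "\<And>j. j < m \<Longrightarrow> t j = t' j"
  have "t ` {..<m} = t' ` {..<m}" by (rule image_cong) (auto simp: H)
  moreover have "(\<Sum>j<m. t j powr r) = (\<Sum>j<m. t' j powr r)" for r by (rule sum.cong) (auto simp: H)
  ultimately show ?thesis unfolding s_comb_def by simp
qed

lemma single:
  fixes TX :: "'a::banach_lattice itself" and TY :: "'b::banach_lattice itself"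
  assumes D: "rel_decomp_const TX TY s D" and D0: "0 \<le> D"
    and lp: "in_lp s b" and s1: "1 \<le> s"
    and x: "x \<in> frakB TX n" and y: "y \<in> frakB TY n"
  shows "norm (\<Sum>i<n. (c i * b i) *\<^sub>R y i) \<le> D * norm_lp s b * norm (\<Sum>i<n. c i *\<^sub>R x i)"
proof -
  define J where "J = {i. i < n \<and> c i * b i \<noteq> 0}"
  have fJ: "finite J" and Jn: "J \<subseteq> {..<n}" unfolding J_def by auto
  define m where "m = card J"
  obtain g where g: "bij_betw g {0..<m} J" using ex_bij_betw_nat_finite[OF fJ] unfolding m_def by blast
  then have g': "bij_betw g {..<m} J" by (simp add: atLeast0LessThan)
  have gJ: "g j \<in> J" if "j < m" for j using g' that by (auto dest: bij_betwE)
  have ginj: "inj_on g {..<m}" using g' by (rule bij_betw_imp_inj_on)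
  have xn: "norm (x i) = 1" "\<And>j. i < n \<Longrightarrow> j < n \<Longrightarrow> i \<noteq> j \<Longrightarrow> lat_disjoint (x i) (x j)"
    if "i < n" for i using x that unfolding frakB_def by auto
  have yn: "norm (y i) = 1" "\<And>j. i < n \<Longrightarrow> j < n \<Longrightarrow> i \<noteq> j \<Longrightarrow> lat_disjoint (y i) (y j)"
    if "i < n" for i using y that unfolding frakB_def by auto
  define x' where "x' j = c (g j) *\<^sub>R x (g j)" for j
  define y' where "y' j = (c (g j) * b (g j)) *\<^sub>R y (g j)" for j
  have gprop: "g j < n" "c (g j) \<noteq> 0" "b (g j) \<noteq> 0" if "j < m" for j
    using gJ[OF that] unfolding J_def by auto
  have dx: "disj_nonzero m x'"
    unfolding disj_nonzero_def
  proof (intro conjI allI impI)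
    fix i assume "i < m" then show "x' i \<noteq> 0"
      using gprop[of i] xn[of "g i"] unfolding x'_def by auto
  next
    fix i j assume ij: "i < m" "j < m" "i \<noteq> j"
    then have "g i \<noteq> g j" using ginj by (auto dest: inj_onD)
    then show "lat_disjoint (x' i) (x' j)" unfolding x'_def
      using ij gprop by (intro disj_scale xn) auto
  qed
  have dy: "disj_nonzero m y'"
    unfolding disj_nonzero_def
  proof (intro conjI allI impI)
    fix i assume "i < m" then show "y' i \<noteq> 0"
      using gprop[of i] yn[of "g i"] unfolding y'_def by auto
  next
    fix i j assume ij: "i < m" "j < m" "i \<noteq> j"
    then have "g i \<noteq> g j" using ginj by (auto dest: inj_onD)
    then show "lat_disjoint (y' i) (y' j)" unfolding y'_def
      using ij gprop by (intro disj_scale yn) auto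
  qed
  have main: "norm (\<Sum>j<m. y' j) \<le> D * s_comb s m (\<lambda>j. norm (y' j) / norm (x' j)) * norm (\<Sum>j<m. x' j)"
    using D[unfolded rel_decomp_const_def, rule_format, OF dx dy] .
  have "s_comb s m (\<lambda>j. norm (y' j) / norm (x' j)) = s_comb s m (\<lambda>j. \<bar>b (g j)\<bar>)"
    by (rule s_comb_cong) (use gprop xn yn in \<open>simp add: x'_def y'_def abs_mult\<close>)
  also have "\<dots> \<le> norm_lp s b" by (rule scomb_le[OF lp s1 ginj])
  finally have sc: "s_comb s m (\<lambda>j. norm (y' j) / norm (x' j)) \<le> norm_lp s b" .
  have ysum: "(\<Sum>j<m. y' j) = (\<Sum>i<n. (c i * b i) *\<^sub>R y i)"
  proof -
    have "(\<Sum>j<m. y' j) = (\<Sum>i\<in>J. (c i * b i) *\<^sub>R y i)"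
      unfolding y'_def by (rule sum.reindex_bij_betw[OF g'])
    also have "\<dots> = (\<Sum>i<n. (c i * b i) *\<^sub>R y i)"
      by (rule sum.mono_neutral_left) (auto simp: J_def)
    finally show ?thesis .
  qed
  have xsum: "(\<Sum>j<m. x' j) = (\<Sum>i\<in>J. c i *\<^sub>R x i)"
    unfolding x'_def by (rule sum.reindex_bij_betw[OF g'])
  have xle: "norm (\<Sum>j<m. x' j) \<le> norm (\<Sum>i<n. c i *\<^sub>R x i)"
    unfolding xsum by (rule subsum[OF _ Jn]) (use xn in auto)
  have "norm (\<Sum>i<n. (c i * b i) *\<^sub>R y i) \<le> D * s_comb s m (\<lambda>j. norm (y' j) / norm (x' j)) * norm (\<Sum>j<m. x' j)"
    using main ysum by simp
  also have "\<dots> \<le> D * norm_lp s b * norm (\<Sum>i<n. c i *\<^sub>R x i)"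
    using sc xle D0 s_comb_nonneg norm_lp_nonneg[OF lp] by (intro mult_mono mult_left_mono) auto
  finally show ?thesis .
qed


lemma phi_bound:
  fixes TX :: "'a::banach_lattice itself" and TY :: "'b::banach_lattice itself"
  assumes D: "rel_decomp_const TX TY s D" and D0: "0 \<le> D"
    and lp: "in_lp s b" and s1: "1 \<le> s" and inf: "infinite_dimensional TX"
    and y: "y \<in> frakB TY n"
  shows "norm (\<Sum>i<n. (c i * b i) *\<^sub>R y i) \<le> D * norm_lp s b * Phi_n TX n c"
  unfolding Phi_n_def
  by (rule inf_bound) (use frakB_nonempty[OF inf] single[OF D D0 lp s1 _ y] D0 norm_lp_nonneg[OF lp] in auto)

lemma key:
  fixes TX :: "'a::banach_lattice itself" and TY :: "'b::banach_lattice itself"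
  assumes D: "rel_decomp_const TX TY s D" and D0: "0 \<le> D"
    and lp: "in_lp s b" and s1: "1 \<le> s" and inf: "infinite_dimensional TX"
    and y: "y \<in> frakB TY n"
  shows "norm (\<Sum>i<n. (a i * b i) *\<^sub>R y i) \<le> D * norm_lp s b * XL_n TX n a"
  unfolding XL_n_def
proof (rule inf_bound)
  show "{\<Sum>k\<in>F. Phi_n TX n (c k) |F c. finite (F::nat set) \<and> (\<forall>i<n. a i = (\<Sum>k\<in>F. c k i))} \<noteq> {}"
  proof -
    have "(\<Sum>k\<in>{0::nat}. Phi_n TX n ((\<lambda>_. a) k)) \<in>
      {\<Sum>k\<in>F. Phi_n TX n (c k) |F c. finite (F::nat set) \<and> (\<forall>i<n. a i = (\<Sum>k\<in>F. c k i))}"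
      by (intro CollectI exI[of _ "{0::nat}"] exI[of _ "\<lambda>_. a"]) auto
    then show ?thesis by blast
  qed
  show "0 \<le> D * norm_lp s b" using D0 norm_lp_nonneg[OF lp] by simp
next
  fix v assume "v \<in> {\<Sum>k\<in>F. Phi_n TX n (c k) |F c. finite (F::nat set) \<and> (\<forall>i<n. a i = (\<Sum>k\<in>F. c k i))}"
  then obtain F :: "nat set" and c where v: "v = (\<Sum>k\<in>F. Phi_n TX n (c k))" and F: "finite F"
    and ac: "\<forall>i<n. a i = (\<Sum>k\<in>F. c k i)" by blast
  have "(\<Sum>i<n. (a i * b i) *\<^sub>R y i) = (\<Sum>i<n. \<Sum>k\<in>F. (c k i * b i) *\<^sub>R y i)"
    by (rule sum.cong) (use ac in \<open>auto simp: sum_distrib_right scaleR_sum_left\<close>)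
  also have "\<dots> = (\<Sum>k\<in>F. \<Sum>i<n. (c k i * b i) *\<^sub>R y i)" by (rule sum.swap)
  finally have "norm (\<Sum>i<n. (a i * b i) *\<^sub>R y i) = norm (\<Sum>k\<in>F. \<Sum>i<n. (c k i * b i) *\<^sub>R y i)" by simp
  also have "\<dots> \<le> (\<Sum>k\<in>F. norm (\<Sum>i<n. (c k i * b i) *\<^sub>R y i))" by (rule norm_sum)
  also have "\<dots> \<le> (\<Sum>k\<in>F. D * norm_lp s b * Phi_n TX n (c k))"
    by (rule sum_mono) (rule phi_bound[OF D D0 lp s1 inf y])
  also have "\<dots> = D * norm_lp s b * v" unfolding v by (simp add: sum_distrib_left)
  finally show "norm (\<Sum>i<n. (a i * b i) *\<^sub>R y i) \<le> D * norm_lp s b * v" .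
qed

theorem mainTheorem10:
  fixes TX :: "'a::banach_lattice itself" and TY :: "'b::banach_lattice itself"
    and s :: ereal and a b :: "nat \<Rightarrow> real"
  assumes "infinite_dimensional TX" and "infinite_dimensional TY"
    and "1 \<le> s"
    and "rel_s_decomposable TX TY s"
    and "in_XL TX a" and "in_lp s b"
  shows "in_XU TY (\<lambda>i. a i * b i)
    \<and> norm_XU TY (\<lambda>i. a i * b i) \<le> D_s TX TY s * norm_lp s b * norm_XL TX a"
proof -
  note infX = assms(1) and infY = assms(2) and s1 = assms(3) and XL = assms(5) and lp = assms(6)
  define S where "S = {D. rel_decomp_const TX TY s D}"
  have Sne: "S \<noteq> {}" using assms(4) unfolding S_def rel_s_decomposable_def by blast
  define C where "C = norm_lp s b * norm_XL TX a"
  have bddXL: "bdd_above (range (\<lambda>n. XL_n TX n a))" using XL by (simp add: in_XL_def)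
  have XLle: "XL_n TX n a \<le> norm_XL TX a" for n
    unfolding norm_XL_def by (rule cSUP_upper[OF _ bddXL]) auto
  have Phi0: "0 \<le> Phi_n TX n c" for n c
    unfolding Phi_n_def by (rule cINF_greatest[OF frakB_nonempty[OF infX]]) auto
  have XL0: "0 \<le> XL_n TX n a" for n
    unfolding XL_n_def
  proof (rule cInf_greatest)
    have "(\<Sum>k\<in>{0::nat}. Phi_n TX n ((\<lambda>_. a) k)) \<in>
      {\<Sum>k\<in>F. Phi_n TX n (c k) |F c. finite (F::nat set) \<and> (\<forall>i<n. a i = (\<Sum>k\<in>F. c k i))}"
      by (intro CollectI exI[of _ "{0::nat}"] exI[of _ "\<lambda>_. a"]) auto
    then show "{\<Sum>k\<in>F. Phi_n TX n (c k) |F c. finite (F::nat set) \<and> (\<forall>i<n. a i = (\<Sum>k\<in>F. c k i))} \<noteq> {}"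
      by blast
  next
    fix v assume "v \<in> {\<Sum>k\<in>F. Phi_n TX n (c k) |F c. finite (F::nat set) \<and> (\<forall>i<n. a i = (\<Sum>k\<in>F. c k i))}"
    then show "0 \<le> v" using Phi0 by (auto intro: sum_nonneg)
  qed
  have C0: "0 \<le> C" unfolding C_def
    using norm_lp_nonneg[OF lp] order_trans[OF XL0 XLle] by simp
  have XUle: "XU_n TY n (\<lambda>i. a i * b i) \<le> D * C" if D: "D \<in> S" for D n
  proof -
    have Dr: "rel_decomp_const TX TY s D" using D by (simp add: S_def)
    have D0: "0 \<le> D" by (rule D_nonneg[OF infX infY Dr])
    have K0: "0 \<le> D * norm_lp s b" using D0 norm_lp_nonneg[OF lp] by simp
    show ?thesis unfolding XU_n_def
    proof (rule cSUP_least[OF frakB_nonempty[OF infY]])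
      fix y assume y: "y \<in> frakB TY n"
      have "norm (\<Sum>i<n. (a i * b i) *\<^sub>R y i) \<le> D * norm_lp s b * XL_n TX n a"
        by (rule key[OF Dr D0 lp s1 infX y])
      also have "\<dots> \<le> D * norm_lp s b * norm_XL TX a" by (rule mult_left_mono[OF XLle K0])
      finally show "norm (\<Sum>i<n. (a i * b i) *\<^sub>R y i) \<le> D * C" unfolding C_def by (simp add: mult.assoc)
    qed
  qed
  obtain D1 where D1: "D1 \<in> S" using Sne by blast
  have inXU: "in_XU TY (\<lambda>i. a i * b i)"
    unfolding in_XU_def bdd_above_def using XUle[OF D1] by blast
  have NXU: "norm_XU TY (\<lambda>i. a i * b i) \<le> D * C" if "D \<in> S" for D
    unfolding norm_XU_def by (rule cSUP_least) (use XUle[OF that] in auto)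
  have "norm_XU TY (\<lambda>i. a i * b i) \<le> C * Inf S"
    by (rule inf_bound[OF Sne _ C0]) (use NXU in \<open>simp add: mult.commute\<close>)
  then have "norm_XU TY (\<lambda>i. a i * b i) \<le> D_s TX TY s * norm_lp s b * norm_XL TX a"
    unfolding C_def D_s_def S_def by (simp add: mult.commute mult.left_commute)
  with inXU show ?thesis by blast
qed


end
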